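(* Let $\mathrm{M}$ be a loopless matroid on a finite set $E$ with lattice of flats $\mathcal{L}$, and let $\vartriangleleft$ be a total order on $E$. For every $F\in\mathcal{L}$: (i) $C_\vartriangleleft(F,\hat1)=\{F\vee H: H\in C_\vartriangleleft(\hat0,\hat1)\}$; (ii) $C_\vartriangleleft(\hat0,\hat1)\cap[\hat0,F]\subseteq C_\vartriangleleft(\hat0,F)$.
   Context: Flats are ordered by inclusion, $\hat0=\varnothing$, $\hat1=E$, $F\vee H=\operatorname{cl}_{\mathrm{M}}(F\cup H)$. For flats $F\leqslant G$, writing $G\setminus F=\{e_1\vartriangleleft e_2\vartriangleleft\dots\vartriangleleft e_k\}$ and $F_i=\operatorname{cl}_{\mathrm{M}}(F\cup\{e_1,\dots,e_i\})$, the $\vartriangleleft$-chain from $F$ to $G$ is the set of flats $C_\vartriangleleft(F,G)=\{F,F_1,F_2,\dots,F_k=G\}$. *)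

theory Defs
  imports Main
begin

definition matroid :: "'a set \<Rightarrow> ('a set \<Rightarrow> bool) \<Rightarrow> bool" where
  "matroid E indep \<longleftrightarrow>
     finite E \<and> indep {} \<and>
     (\<forall>I. indep I \<longrightarrow> I \<subseteq> E) \<and>
     (\<forall>I J. indep J \<and> I \<subseteq> J \<longrightarrow> indep I) \<and>
     (\<forall>I J. indep I \<and> indep J \<and> card I < card J \<longrightarrow> (\<exists>e\<in>J - I. indep (insert e I)))"

definition mrank :: "('a set \<Rightarrow> bool) \<Rightarrow> 'a set \<Rightarrow> nat" where
  "mrank indep X = Max (card ` {I. I \<subseteq> X \<and> indep I})"

definition mcl :: "'a set \<Rightarrow> ('a set \<Rightarrow> bool) \<Rightarrow> 'a set \<Rightarrow> 'a set" where
  "mcl E indep X = {e \<in> E. mrank indep (insert e X) = mrank indep X}"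

definition loopless :: "'a set \<Rightarrow> ('a set \<Rightarrow> bool) \<Rightarrow> bool" where
  "loopless E indep \<longleftrightarrow> (\<forall>e\<in>E. indep {e})"

definition flat :: "'a set \<Rightarrow> ('a set \<Rightarrow> bool) \<Rightarrow> 'a set \<Rightarrow> bool" where
  "flat E indep F \<longleftrightarrow> F \<subseteq> E \<and> mcl E indep F = F"

text \<open>The chain C(F,G) for a total order r (reflexive relation) on E:
  writing G - F = {e_1 < ... < e_k}, F_i = cl(F \<union> {e_1..e_i}); the prefix
  {e_1..e_i} is exactly the set of elements of G - F that are r-below e_i.\<close>
definition ochain :: "'a set \<Rightarrow> ('a set \<Rightarrow> bool) \<Rightarrow> 'a rel \<Rightarrow> 'a set \<Rightarrow> 'a set \<Rightarrow> 'a set set" where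
  "ochain E indep r F G =
     insert F {mcl E indep (F \<union> {e' \<in> G - F. (e', e) \<in> r}) | e. e \<in> G - F}"

end

theory Submission
  imports Defs
begin

lemma m_indep_sub: "matroid E indep \<Longrightarrow> indep I \<Longrightarrow> I \<subseteq> E"
  unfolding matroid_def by blast

lemma m_fin: "matroid E indep \<Longrightarrow> finite E"
  unfolding matroid_def by blast

lemma m_subset: "matroid E indep \<Longrightarrow> indep J \<Longrightarrow> I \<subseteq> J \<Longrightarrow> indep I"
  unfolding matroid_def by blast

lemma m_aug: "matroid E indep \<Longrightarrow> indep I \<Longrightarrow> indep J \<Longrightarrow> card I < card J
   \<Longrightarrow> \<exists>e\<in>J - I. indep (insert e I)"
  unfolding matroid_def by blast

lemma rank_set_fin:
  assumes "matroid E indep" "X \<subseteq> E"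
  shows "finite (card ` {I. I \<subseteq> X \<and> indep I})" "card ` {I. I \<subseteq> X \<and> indep I} \<noteq> {}"
proof -
  have "{I. I \<subseteq> X \<and> indep I} \<subseteq> Pow E" using assms by auto
  moreover have "finite (Pow E)" using m_fin[OF assms(1)] by simp
  ultimately show "finite (card ` {I. I \<subseteq> X \<and> indep I})" by (meson finite_imageI finite_subset)
  have "{} \<in> {I. I \<subseteq> X \<and> indep I}" using assms(1) unfolding matroid_def by auto
  then show "card ` {I. I \<subseteq> X \<and> indep I} \<noteq> {}" by blast
qed

lemma rank_exists:
  assumes "matroid E indep" "X \<subseteq> E"
  shows "\<exists>I. I \<subseteq> X \<and> indep I \<and> card I = mrank indep X"
proof -
  have "mrank indep X \<in> card ` {I. I \<subseteq> X \<and> indep I}"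
    unfolding mrank_def using rank_set_fin[OF assms] by (rule Max_in)
  then show ?thesis by auto
qed

lemma rank_ge:
  assumes "matroid E indep" "X \<subseteq> E" "I \<subseteq> X" "indep I"
  shows "card I \<le> mrank indep X"
  unfolding mrank_def using rank_set_fin[OF assms(1,2)] assms(3,4) by (auto intro: Max_ge)

lemma rank_mono:
  assumes "matroid E indep" "X \<subseteq> Y" "Y \<subseteq> E"
  shows "mrank indep X \<le> mrank indep Y"
proof -
  obtain I where "I \<subseteq> X" "indep I" "card I = mrank indep X"
    using rank_exists[OF assms(1)] assms by (meson order_trans)
  then show ?thesis using rank_ge[OF assms(1,3)] assms(2) by force
qed

lemma rank_extend:
  assumes M: "matroid E indep" and XE: "X \<subseteq> E" and IX: "I \<subseteq> X" and iI: "indep I"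
  shows "\<exists>J. I \<subseteq> J \<and> J \<subseteq> X \<and> indep J \<and> card J = mrank indep X"
proof -
  let ?S = "{J. I \<subseteq> J \<and> J \<subseteq> X \<and> indep J}"
  have "?S \<subseteq> Pow E" using XE by auto
  moreover have "finite (Pow E)" using m_fin[OF M] by simp
  ultimately have "finite ?S" by (rule finite_subset)
  then have fS: "finite (card ` ?S)" by (rule finite_imageI)
  have "I \<in> ?S" using IX iI by auto
  then have neS: "card ` ?S \<noteq> {}" by blast
  have "Max (card ` ?S) \<in> card ` ?S" using fS neS by (rule Max_in)
  then obtain J where J: "J \<in> ?S" "card J = Max (card ` ?S)" by auto
  have le: "card J \<le> mrank indep X" using J(1) rank_ge[OF M XE] by blast
  show ?thesis
  proof (cases "card J = mrank indep X")
    case True then show ?thesis using J by blast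
  next
    case False
    then have lt: "card J < mrank indep X" using le by simp
    obtain K where K: "K \<subseteq> X" "indep K" "card K = mrank indep X" using rank_exists[OF M XE] by blast
    have iJ: "indep J" using J(1) by blast
    have "card J < card K" using lt K(3) by simp
    then obtain e where e: "e \<in> K - J" "indep (insert e J)" using m_aug[OF M iJ K(2)] by blast
    have fJ: "finite J" using m_indep_sub[OF M iJ] m_fin[OF M] by (rule finite_subset)
    have eJ: "e \<notin> J" using e(1) by blast
    have "insert e J \<in> ?S" using e(1,2) J(1) K(1) by blast
    then have "card (insert e J) \<in> card ` ?S" by (rule imageI)
    then have "card (insert e J) \<le> Max (card ` ?S)" by (rule Max_ge[OF fS])
    moreover have "card (insert e J) = Suc (card J)" using fJ eJ by simp
    ultimately show ?thesis using J(2) by linarith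
  qed
qed

lemma cl_sub: "mcl E indep X \<subseteq> E" unfolding mcl_def by auto

lemma cl_ext: "X \<subseteq> E \<Longrightarrow> X \<subseteq> mcl E indep X"
  unfolding mcl_def by (auto simp: insert_absorb)

lemma indep_fin: "matroid E indep \<Longrightarrow> indep I \<Longrightarrow> finite I"
  using m_indep_sub m_fin finite_subset by metis

lemma cl_mono:
  assumes M: "matroid E indep" and XY: "X \<subseteq> Y" and YE: "Y \<subseteq> E" and e: "e \<in> mcl E indep X"
  shows "e \<in> mcl E indep Y"
proof -
  have eE: "e \<in> E" and rX: "mrank indep (insert e X) = mrank indep X" using e unfolding mcl_def by auto
  have XE: "X \<subseteq> E" using XY YE by auto
  obtain I where I: "I \<subseteq> X" "indep I" "card I = mrank indep X" using rank_exists[OF M XE] by blast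
  obtain J where J: "I \<subseteq> J" "J \<subseteq> Y" "indep J" "card J = mrank indep Y"
    using rank_extend[OF M YE _ I(2)] I(1) XY by (meson order_trans)
  have YeE: "insert e Y \<subseteq> E" using YE eE by auto
  have ge: "mrank indep Y \<le> mrank indep (insert e Y)" using rank_mono[OF M _ YeE] by blast
  show ?thesis
  proof (rule ccontr)
    assume "e \<notin> mcl E indep Y"
    then have "mrank indep (insert e Y) \<noteq> mrank indep Y" using eE unfolding mcl_def by auto
    then have lt: "card J < mrank indep (insert e Y)" using ge J(4) by simp
    obtain K where K: "K \<subseteq> insert e Y" "indep K" "card K = mrank indep (insert e Y)"
      using rank_exists[OF M YeE] by blast
    obtain k where k: "k \<in> K - J" "indep (insert k J)" using m_aug[OF M J(3) K(2)] lt K(3) by auto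
    have fJ: "finite J" using indep_fin[OF M J(3)] .
    show False
    proof (cases "k \<in> Y")
      case True
      then have "card (insert k J) \<le> mrank indep Y" using rank_ge[OF M YE _ k(2)] J(2) by auto
      then show False using fJ k(1) J(4) by simp
    next
      case False
      then have ke: "k = e" using k K(1) by auto
      have eI: "e \<notin> I" using k ke J(1) by auto
      have "insert e I \<subseteq> insert k J" using ke J(1) by auto
      then have "indep (insert e I)" by (rule m_subset[OF M k(2)])
      moreover have "insert e I \<subseteq> insert e X" using I by auto
      moreover have "insert e X \<subseteq> E" using XE eE by auto
      ultimately have "card (insert e I) \<le> mrank indep (insert e X)" using rank_ge[OF M] by blast
      then show False using rX I(3) eI indep_fin[OF M I(2)] by simp
    qed
  qed
qed

lemma rank_cl:
  assumes M: "matroid E indep" and XE: "X \<subseteq> E"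
  shows "mrank indep (mcl E indep X) = mrank indep X"
proof -
  obtain I where I: "I \<subseteq> X" "indep I" "card I = mrank indep X" using rank_exists[OF M XE] by blast
  have Xc: "X \<subseteq> mcl E indep X" using cl_ext[OF XE] .
  obtain J where J: "I \<subseteq> J" "J \<subseteq> mcl E indep X" "indep J" "card J = mrank indep (mcl E indep X)"
    using rank_extend[OF M cl_sub[of E indep X] order_trans[OF I(1) Xc] I(2)] by blast
  show ?thesis
  proof (rule ccontr)
    assume ne: "\<not> ?thesis"
    have "I \<noteq> J" using ne I(3) J(4) by auto
    then obtain k where k: "k \<in> J" "k \<notin> I" using J(1) by blast
    have ik: "indep (insert k I)" using m_subset[OF M J(3)] k J(1) by auto
    have fI: "finite I" using indep_fin[OF M I(2)] .
    show False
    proof (cases "k \<in> X")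
      case True
      then have "card (insert k I) \<le> mrank indep X" using rank_ge[OF M XE _ ik] I(1) by auto
      then show False using fI k I(3) by simp
    next
      case False
      have kc: "k \<in> mcl E indep X" using k J(2) by auto
      then have kE: "k \<in> E" and rk: "mrank indep (insert k X) = mrank indep X" unfolding mcl_def by auto
      have "card (insert k I) \<le> mrank indep (insert k X)"
      proof (rule rank_ge[OF M _ _ ik])
        show "insert k X \<subseteq> E" using XE kE by simp
        show "insert k I \<subseteq> insert k X" using I(1) by (rule insert_mono)
      qed
      then show False using rk fI k I(3) by simp
    qed
  qed
qed

lemma cl_idem:
  assumes M: "matroid E indep" and XE: "X \<subseteq> E"
  shows "mcl E indep (mcl E indep X) \<subseteq> mcl E indep X"
proof
  fix e assume e: "e \<in> mcl E indep (mcl E indep X)"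
  then have eE: "e \<in> E" and r: "mrank indep (insert e (mcl E indep X)) = mrank indep (mcl E indep X)"
    unfolding mcl_def by auto
  have Xc: "X \<subseteq> mcl E indep X" using cl_ext[OF XE] .
  have "mrank indep (insert e X) \<le> mrank indep (insert e (mcl E indep X))"
  proof (rule rank_mono[OF M])
    show "insert e X \<subseteq> insert e (mcl E indep X)" using Xc by (rule insert_mono)
    show "insert e (mcl E indep X) \<subseteq> E" using cl_sub[of E indep X] eE by simp
  qed
  moreover have "mrank indep X \<le> mrank indep (insert e X)"
    by (rule rank_mono[OF M subset_insertI insert_subset[THEN iffD2, OF conjI[OF eE XE]]])
  ultimately have "mrank indep (insert e X) = mrank indep X" using r rank_cl[OF M XE] by simp
  then show "e \<in> mcl E indep X" using eE unfolding mcl_def by auto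
qed

lemma cl_join:
  assumes M: "matroid E indep" and FE: "F \<subseteq> E" and XE: "X \<subseteq> E"
  shows "mcl E indep (F \<union> mcl E indep X) = mcl E indep (F \<union> X)"
proof
  have s1: "F \<union> X \<subseteq> F \<union> mcl E indep X" using cl_ext[OF XE] by auto
  have s2: "F \<union> mcl E indep X \<subseteq> E" using FE cl_sub[of E indep X] by (rule Un_least)
  show "mcl E indep (F \<union> X) \<subseteq> mcl E indep (F \<union> mcl E indep X)"
    using cl_mono[OF M s1 s2] by (rule subsetI)
  have FXE: "F \<union> X \<subseteq> E" using FE XE by auto
  have "F \<subseteq> mcl E indep (F \<union> X)" using cl_ext[OF FXE] by auto
  moreover have "mcl E indep X \<subseteq> mcl E indep (F \<union> X)" using cl_mono[OF M Un_upper2 FXE] by (rule subsetI)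
  ultimately have s3: "F \<union> mcl E indep X \<subseteq> mcl E indep (F \<union> X)" by auto
  have "mcl E indep (F \<union> mcl E indep X) \<subseteq> mcl E indep (mcl E indep (F \<union> X))"
    using cl_mono[OF M s3 cl_sub[of E indep "F \<union> X"]] by (rule subsetI)
  then show "mcl E indep (F \<union> mcl E indep X) \<subseteq> mcl E indep (F \<union> X)"
    using cl_idem[OF M FXE] by blast
qed

lemma max_exists:
  assumes "finite A" "A \<noteq> {}" "A \<subseteq> E" "\<forall>x\<in>E. (x,x) \<in> r" "trans r" "total_on E r"
  shows "\<exists>m\<in>A. \<forall>x\<in>A. (x, m) \<in> r"
  using assms(1,2,3)
proof (induction A rule: finite_ne_induct)
  case (singleton x)
  then have "(x, x) \<in> r" using assms(4) by simp
  then show ?case by simp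
next
  case (insert x F)
  then have FE: "F \<subseteq> E" and xE: "x \<in> E" by simp_all
  obtain m where m: "m \<in> F" "\<forall>y\<in>F. (y, m) \<in> r" using insert.IH FE by blast
  have mE: "m \<in> E" using m(1) FE by blast
  show ?case
  proof (cases "(m, x) \<in> r")
    case True
    have "\<forall>y\<in>insert x F. (y, x) \<in> r"
    proof
      fix y assume "y \<in> insert x F"
      then show "(y, x) \<in> r"
      proof
        assume "y = x" then show ?thesis using assms(4) xE by simp
      next
        assume "y \<in> F" then have ym: "(y, m) \<in> r" using m(2) by blast
        show ?thesis by (rule transD[OF assms(5) ym True])
      qed
    qed
    then show ?thesis by blast
  next
    case False
    have "x \<noteq> m \<longrightarrow> (x, m) \<in> r \<or> (m, x) \<in> r" using assms(6) xE mE unfolding total_on_def by blast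
    then have "(x, m) \<in> r" using False assms(4) mE by auto
    then have "\<forall>y\<in>insert x F. (y, m) \<in> r" using m(2) by blast
    then show ?thesis using m(1) by blast
  qed
qed

lemma ochain_I: "e \<in> G - F \<Longrightarrow> mcl E indep (F \<union> {e' \<in> G - F. (e', e) \<in> r}) \<in> ochain E indep r F G"
  unfolding ochain_def by blast

lemma ochain_F: "F \<in> ochain E indep r F G"
  unfolding ochain_def by blast

lemma ochain_E:
  assumes "x \<in> ochain E indep r F G"
  obtains "x = F" | e where "e \<in> G - F" "x = mcl E indep (F \<union> {e' \<in> G - F. (e', e) \<in> r})"
  using assms unfolding ochain_def by blast

theorem lemma3p4:
  assumes "matroid E indep"
    and "loopless E indep"
    and "linear_order_on E r"
    and "flat E indep F"
  shows "ochain E indep r F E = {mcl E indep (F \<union> H) | H. H \<in> ochain E indep r {} E}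
         \<and> ochain E indep r {} E \<inter> {G. flat E indep G \<and> G \<subseteq> F} \<subseteq> ochain E indep r {} F"
proof -
  note M = assms(1)
  have rfl: "\<forall>x\<in>E. (x,x) \<in> r" and tr: "trans r" and tot: "total_on E r"
    using assms(3) unfolding linear_order_on_def partial_order_on_def preorder_on_def refl_on_def
    by auto
  have FE: "F \<subseteq> E" and clF: "mcl E indep F = F" using assms(4) unfolding flat_def by auto
  define D where "D e = {e' \<in> E. (e', e) \<in> r}" for e
  have DE: "D e \<subseteq> E" for e unfolding D_def by auto
  have D0: "{e' \<in> G - {}. (e', e) \<in> r} = {e' \<in> G. (e', e) \<in> r}" for G e by simp
  have oc0E: "P" if "x \<in> ochain E indep r {} E" "x = {} \<Longrightarrow> P"
     "\<And>e. e \<in> E \<Longrightarrow> x = mcl E indep (D e) \<Longrightarrow> P" for x P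
    using that(1)
  proof (rule ochain_E)
    show "x = {} \<Longrightarrow> P" by (rule that(2))
    fix e assume "e \<in> E - {}" "x = mcl E indep ({} \<union> {e' \<in> E - {}. (e', e) \<in> r})"
    then have "e \<in> E" "x = mcl E indep (D e)" unfolding D_def by simp_all
    then show P by (rule that(3))
  qed
  have part1: "ochain E indep r F E = {mcl E indep (F \<union> H) | H. H \<in> ochain E indep r {} E}"
  proof
    show "ochain E indep r F E \<subseteq> {mcl E indep (F \<union> H) | H. H \<in> ochain E indep r {} E}"
    proof
      fix x assume x: "x \<in> ochain E indep r F E"
      show "x \<in> {mcl E indep (F \<union> H) | H. H \<in> ochain E indep r {} E}"
        using x
      proof (rule ochain_E)
        assume "x = F"
        then have "x = mcl E indep (F \<union> {})" using clF by simp
        moreover have "{} \<in> ochain E indep r {} E" by (rule ochain_F)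
        ultimately show ?thesis by blast
      next
        fix e assume e: "e \<in> E - F" "x = mcl E indep (F \<union> {e' \<in> E - F. (e', e) \<in> r})"
        have "F \<union> {e' \<in> E - F. (e', e) \<in> r} = F \<union> D e" unfolding D_def by auto
        then have "x = mcl E indep (F \<union> mcl E indep (D e))" using e(2) cl_join[OF M FE DE] by simp
        moreover have "mcl E indep (D e) \<in> ochain E indep r {} E"
          using ochain_I[of e E "{}" E indep r] e(1) unfolding D_def by simp
        ultimately show ?thesis by blast
      qed
    qed
  next
    show "{mcl E indep (F \<union> H) | H. H \<in> ochain E indep r {} E} \<subseteq> ochain E indep r F E"
    proof
      fix x assume "x \<in> {mcl E indep (F \<union> H) | H. H \<in> ochain E indep r {} E}"
      then obtain H where H: "x = mcl E indep (F \<union> H)" "H \<in> ochain E indep r {} E" by blast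
      show "x \<in> ochain E indep r F E"
        using H(2)
      proof (rule oc0E)
        assume "H = {}"
        then have "x = F" using H(1) clF by simp
        then show ?thesis using ochain_F by simp
      next
        fix e assume e: "e \<in> E" "H = mcl E indep (D e)"
        define S where "S = {e' \<in> E - F. (e', e) \<in> r}"
        have x1: "x = mcl E indep (F \<union> S)"
        proof -
          have "x = mcl E indep (F \<union> D e)" using H(1) e(2) cl_join[OF M FE DE] by simp
          moreover have "F \<union> D e = F \<union> S" unfolding D_def S_def by auto
          ultimately show ?thesis by simp
        qed
        show ?thesis
        proof (cases "S = {}")
          case True then show ?thesis using x1 clF ochain_F by simp
        next
          case False
          have SE: "S \<subseteq> E" unfolding S_def by auto
          have fS: "finite S" using m_fin[OF M] SE by (rule finite_subset[rotated])
          obtain m where m: "m \<in> S" "\<forall>y\<in>S. (y, m) \<in> r"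
            using max_exists[OF fS False SE rfl tr tot] by blast
          have me: "(m, e) \<in> r" using m(1) unfolding S_def by simp
          have "{e' \<in> E - F. (e', m) \<in> r} = S"
          proof
            show "{e' \<in> E - F. (e', m) \<in> r} \<subseteq> S"
            proof
              fix y assume "y \<in> {e' \<in> E - F. (e', m) \<in> r}"
              then have "y \<in> E - F" "(y, m) \<in> r" by auto
              moreover have "(y, e) \<in> r" using transD[OF tr \<open>(y, m) \<in> r\<close> me] .
              ultimately show "y \<in> S" unfolding S_def by simp
            qed
            show "S \<subseteq> {e' \<in> E - F. (e', m) \<in> r}" using m(2) unfolding S_def by auto
          qed
          moreover have "m \<in> E - F" using m(1) unfolding S_def by simp
          ultimately show ?thesis using x1 ochain_I[of m E F E indep r] by simp
        qed
      qed
    qed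
  qed
  have part2: "ochain E indep r {} E \<inter> {G. flat E indep G \<and> G \<subseteq> F} \<subseteq> ochain E indep r {} F"
  proof
    fix G assume G: "G \<in> ochain E indep r {} E \<inter> {G. flat E indep G \<and> G \<subseteq> F}"
    then have G1: "G \<in> ochain E indep r {} E" and GF: "G \<subseteq> F" by auto
    show "G \<in> ochain E indep r {} F"
      using G1
    proof (rule oc0E)
      assume "G = {}" then show ?thesis using ochain_F by simp
    next
      fix e assume e: "e \<in> E" "G = mcl E indep (D e)"
      have "D e \<subseteq> G" using e(2) cl_ext[OF DE] by simp
      then have DF: "D e \<subseteq> F" using GF by (rule order_trans)
      have "e \<in> D e" using e(1) rfl unfolding D_def by auto
      then have eF: "e \<in> F" using DF by auto
      have "D e = {e' \<in> F - {}. (e', e) \<in> r}" using DF FE unfolding D_def by auto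
      then show ?thesis using e(2) eF ochain_I[of e F "{}" E indep r] by simp
    qed
  qed
  show ?thesis using part1 part2 by (rule conjI)
qed

end
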